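(* Let $(X,d)$ be a length space and $\Gamma$ a group acting properly by isometries on $X$ such that $\Gamma\backslash X$ is compact with diameter at most $D$. Suppose there exist $x_0\in X$, $C_0>1$ and $R_0>D$ such that for every $r\in[R_0/2,2R_0]$ one has $0<\mu_{x_0}^\Gamma(B(x_0,r))<\infty$ and $\mu_{x_0}^\Gamma(B(x_0,2r))\le C_0\,\mu_{x_0}^\Gamma(B(x_0,r))$. Then: (i) for every $R_1\ge R_0$ and every $r\in[R_1/2,2R_1]$, $\mu_{x_0}^\Gamma(B(x_0,2r))\le C_0^{3(1+[2R_1/R_0])}\mu_{x_0}^\Gamma(B(x_0,r))$; (ii) $\operatorname{Ent}(X,d)\le\frac{3}{R_0}\ln C_0$.
   Context: A length space: any two points are joined by a continuous path and $d$ is the infimum of lengths of such paths. Proper action: $\{\gamma:d(x,\gamma x)\le R\}$ finite. $\mu_{x_0}^\Gamma=\sum_{\gamma\in\Gamma}\delta_{\gamma x_0}$ is the counting measure of the orbit, so $\mu_{x_0}^\Gamma(B(x_0,r))=\#\{\gamma: d(x_0,\gamma x_0)<r\}$; $B(x,r)$ is the open ball. Quotient distance $\bar d(\Gamma x,\Gamma y)=\inf_\gamma d(x,\gamma y)$. $\operatorname{Ent}(X,d)=\liminf_R\frac1R\ln\mu_{x_0}^\Gamma(B(x_0,R))$. $[t]$ is the integer part. *)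

theory Defs
  imports "HOL-Analysis.Analysis" "HOL-Algebra.Group_Action"
begin

definition curve_length :: "(real \<Rightarrow> 'a::metric_space) \<Rightarrow> ereal" where
  "curve_length p = (SUP (n, t) \<in> {(n, t). t 0 = 0 \<and> t n = 1 \<and> (\<forall>i<n. t i \<le> t (Suc i))}.
      ereal (\<Sum>i<n. dist (p (t i)) (p (t (Suc i)))))"

definition length_space :: "'a::metric_space itself \<Rightarrow> bool" where
  "length_space _ \<longleftrightarrow> (\<forall>x y::'a.
     (\<exists>p. path p \<and> pathstart p = x \<and> pathfinish p = y) \<and>
     ereal (dist x y) = (INF p \<in> {p. path p \<and> pathstart p = x \<and> pathfinish p = y}. curve_length p))"

definition isometric_action :: "('g, 'b) monoid_scheme \<Rightarrow> ('g \<Rightarrow> 'a::metric_space \<Rightarrow> 'a) \<Rightarrow> bool" where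
  "isometric_action G \<phi> \<longleftrightarrow> group_action G UNIV \<phi> \<and>
     (\<forall>g\<in>carrier G. \<forall>x y. dist (\<phi> g x) (\<phi> g y) = dist x y)"

definition proper_action :: "('g, 'b) monoid_scheme \<Rightarrow> ('g \<Rightarrow> 'a::metric_space \<Rightarrow> 'a) \<Rightarrow> bool" where
  "proper_action G \<phi> \<longleftrightarrow> (\<forall>x R. finite {g\<in>carrier G. dist x (\<phi> g x) \<le> R})"

definition orbit_dist :: "('g, 'b) monoid_scheme \<Rightarrow> ('g \<Rightarrow> 'a::metric_space \<Rightarrow> 'a) \<Rightarrow> 'a \<Rightarrow> 'a \<Rightarrow> real" where
  "orbit_dist G \<phi> x y = (INF g \<in> carrier G. dist x (\<phi> g y))"

text \<open>Compactness of the quotient metric space, expressed as sequential compactness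
  (equivalent for metric spaces): every sequence of orbits has a subsequence
  converging to some orbit w.r.t. the quotient distance.\<close>
definition compact_quotient :: "('g, 'b) monoid_scheme \<Rightarrow> ('g \<Rightarrow> 'a::metric_space \<Rightarrow> 'a) \<Rightarrow> bool" where
  "compact_quotient G \<phi> \<longleftrightarrow> (\<forall>s::nat \<Rightarrow> 'a. \<exists>y r. strict_mono r \<and>
      (\<lambda>n. orbit_dist G \<phi> (s (r n)) y) \<longlonglongrightarrow> 0)"

definition quotient_diam_le :: "('g, 'b) monoid_scheme \<Rightarrow> ('g \<Rightarrow> 'a::metric_space \<Rightarrow> 'a) \<Rightarrow> real \<Rightarrow> bool" where
  "quotient_diam_le G \<phi> D \<longleftrightarrow> (\<forall>x y. orbit_dist G \<phi> x y \<le> D)"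

text \<open>Orbit counting measure of the open ball: #{g. d(x0, g x0) < r}.\<close>
definition orbit_set :: "('g, 'b) monoid_scheme \<Rightarrow> ('g \<Rightarrow> 'a::metric_space \<Rightarrow> 'a) \<Rightarrow> 'a \<Rightarrow> real \<Rightarrow> 'g set" where
  "orbit_set G \<phi> x0 r = {g \<in> carrier G. dist x0 (\<phi> g x0) < r}"

definition orbit_count :: "('g, 'b) monoid_scheme \<Rightarrow> ('g \<Rightarrow> 'a::metric_space \<Rightarrow> 'a) \<Rightarrow> 'a \<Rightarrow> real \<Rightarrow> real" where
  "orbit_count G \<phi> x0 r = real (card (orbit_set G \<phi> x0 r))"

definition entropy :: "('g, 'b) monoid_scheme \<Rightarrow> ('g \<Rightarrow> 'a::metric_space \<Rightarrow> 'a) \<Rightarrow> 'a \<Rightarrow> ereal" where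
  "entropy G \<phi> x0 = Liminf at_top (\<lambda>R. ereal (ln (orbit_count G \<phi> x0 R) / R))"

end

theory Submission
  imports Defs
begin

lemma os_fin:
  assumes "proper_action G \<phi>"
  shows "finite (orbit_set G \<phi> x0 r)"
proof -
  have "finite {g\<in>carrier G. dist x0 (\<phi> g x0) \<le> r}" using assms unfolding proper_action_def by blast
  moreover have "orbit_set G \<phi> x0 r \<subseteq> {g\<in>carrier G. dist x0 (\<phi> g x0) \<le> r}"
    unfolding orbit_set_def by auto
  ultimately show ?thesis by (rule finite_subset[rotated])
qed

lemma oc_mono:
  assumes "proper_action G \<phi>" "r \<le> s"
  shows "orbit_count G \<phi> x0 r \<le> orbit_count G \<phi> x0 s"
proof -
  have "orbit_set G \<phi> x0 r \<subseteq> orbit_set G \<phi> x0 s" using assms(2) unfolding orbit_set_def by auto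
  thus ?thesis unfolding orbit_count_def using os_fin[OF assms(1)] by (simp add: card_mono)
qed

lemma act_one:
  assumes "isometric_action G \<phi>" shows "\<phi> \<one>\<^bsub>G\<^esub> x = x"
proof -
  interpret group_action G UNIV \<phi> using assms unfolding isometric_action_def by blast
  show ?thesis using id_eq_one by (metis restrict_apply' UNIV_I)
qed

lemma act_comp:
  assumes "isometric_action G \<phi>" "g \<in> carrier G" "h \<in> carrier G"
  shows "\<phi> (g \<otimes>\<^bsub>G\<^esub> h) x = \<phi> g (\<phi> h x)"
proof -
  interpret group_action G UNIV \<phi> using assms unfolding isometric_action_def by blast
  show ?thesis using composition_rule assms by blast
qed

lemma act_iso:
  assumes "isometric_action G \<phi>" "g \<in> carrier G"
  shows "dist (\<phi> g x) (\<phi> g y) = dist x y"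
  using assms unfolding isometric_action_def by blast

lemma path_split:
  fixes x y :: "'a::metric_space"
  assumes "length_space TYPE('a)" "dist x y < L"
  shows "\<exists>p. path p \<and> p 0 = x \<and> p 1 = y \<and> (\<forall>t\<in>{0..1}. dist x (p t) + dist (p t) y < L)"
proof -
  have "(INF p \<in> {p. path p \<and> pathstart p = x \<and> pathfinish p = y}. curve_length p) < ereal L"
    using assms unfolding length_space_def by (metis ereal_less(3) less_ereal.simps(1))
  then obtain p where p: "path p" "pathstart p = x" "pathfinish p = y" "curve_length p < ereal L"
    by (auto simp: INF_less_iff)
  have "\<forall>t\<in>{0..1}. dist x (p t) + dist (p t) y < L"
  proof
    fix t :: real assume t: "t \<in> {0..1}"
    define tt where "tt = (\<lambda>i::nat. if i = 0 then 0 else if i = 1 then t else (1::real))"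
    have "(2, tt) \<in> {(n, t). t 0 = 0 \<and> t n = 1 \<and> (\<forall>i<n. t i \<le> t (Suc i))}"
      using t unfolding tt_def by (auto simp: less_2_cases_iff)
    hence "ereal (\<Sum>i<2. dist (p (tt i)) (p (tt (Suc i)))) \<le> curve_length p"
      unfolding curve_length_def by (rule SUP_upper2) auto
    moreover have "(\<Sum>i<2. dist (p (tt i)) (p (tt (Suc i)))) = dist x (p t) + dist (p t) y"
      using p(2,3) by (simp add: tt_def numeral_2_eq_2 pathstart_def pathfinish_def)
    ultimately have "ereal (dist x (p t) + dist (p t) y) \<le> curve_length p" by simp
    hence "ereal (dist x (p t) + dist (p t) y) < ereal L" using p(4) by (rule order_le_less_trans)
    thus "dist x (p t) + dist (p t) y < L" by simp
  qed
  thus ?thesis using p by (auto simp: pathstart_def pathfinish_def)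
qed


lemma D_nonneg:
  assumes "group G" "quotient_diam_le G \<phi> D"
  shows "0 \<le> D"
proof -
  interpret group G by fact
  have "carrier G \<noteq> {}" using one_closed by blast
  hence "0 \<le> orbit_dist G \<phi> x x" for x unfolding orbit_dist_def by (rule cINF_greatest) auto
  thus ?thesis using assms(2) unfolding quotient_diam_le_def by (meson order_trans)
qed

lemma inv_dist:
  fixes G (structure)
  assumes "group G" "isometric_action G \<phi>" "\<alpha> \<in> carrier G" "\<gamma> \<in> carrier G"
  shows "dist x0 (\<phi> (inv\<^bsub>G\<^esub> \<alpha> \<otimes>\<^bsub>G\<^esub> \<gamma>) x0) = dist (\<phi> \<alpha> x0) (\<phi> \<gamma> x0)"
proof -
  interpret group G by fact
  have "dist x0 (\<phi> (inv \<alpha> \<otimes> \<gamma>) x0) = dist (\<phi> \<alpha> x0) (\<phi> \<alpha> (\<phi> (inv \<alpha> \<otimes> \<gamma>) x0))"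
    using act_iso[OF assms(2,3)] by simp
  also have "\<phi> \<alpha> (\<phi> (inv \<alpha> \<otimes> \<gamma>) x0) = \<phi> (\<alpha> \<otimes> (inv \<alpha> \<otimes> \<gamma>)) x0"
    using act_comp[OF assms(2)] assms by simp
  also have "\<alpha> \<otimes> (inv \<alpha> \<otimes> \<gamma>) = \<gamma>" using assms by (simp add: m_assoc[symmetric] r_inv)
  finally show ?thesis .
qed

lemma decomp:
  fixes G (structure) and \<phi> :: "'g \<Rightarrow> 'a::metric_space \<Rightarrow> 'a"
  assumes ls: "length_space TYPE('a)" and grp: "group G" and iso: "isometric_action G \<phi>"
    and qd: "quotient_diam_le G \<phi> D" and DD: "D < D'" and bD: "0 < b + D'"
    and g: "\<gamma> \<in> carrier G" and dg: "dist x0 (\<phi> \<gamma> x0) < a + b"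
  shows "\<exists>\<alpha>\<in>carrier G. (\<alpha> = \<one>\<^bsub>G\<^esub> \<or> dist x0 (\<phi> \<alpha> x0) < a + D') \<and>
           dist x0 (\<phi> (inv\<^bsub>G\<^esub> \<alpha> \<otimes>\<^bsub>G\<^esub> \<gamma>) x0) < b + D'"
proof -
  interpret group G by fact
  have D0: "0 \<le> D" using D_nonneg[OF grp qd] .
  show ?thesis
  proof (cases "dist x0 (\<phi> \<gamma> x0) < a")
    case True
    have "inv \<gamma> \<otimes> \<gamma> = \<one>" using g by simp
    thus ?thesis using True g bD act_one[OF iso] D0 DD by (intro bexI[of _ \<gamma>]) auto
  next
    case F: False
    show ?thesis
    proof (cases "a \<le> 0")
      case True
      have "inv \<one> \<otimes> \<gamma> = \<gamma>" using g by simp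
      thus ?thesis using True g dg D0 DD by (intro bexI[of _ \<one>]) auto
    next
      case False
      obtain p where p: "path p" "p 0 = x0" "p 1 = \<phi> \<gamma> x0"
        and pl: "\<forall>t\<in>{0..1}. dist x0 (p t) + dist (p t) (\<phi> \<gamma> x0) < a + b"
        using path_split[OF ls dg] by blast
      have cont: "continuous_on {0..1} (\<lambda>t. dist x0 (p t))"
        using p(1) unfolding path_def by (intro continuous_intros)
      obtain t where t: "0 \<le> t" "t \<le> 1" "dist x0 (p t) = a"
        using IVT'[of "\<lambda>t. dist x0 (p t)" 0 a 1, OF _ _ _ cont] p F False by auto
      have d2: "dist (p t) (\<phi> \<gamma> x0) < b" using pl[rule_format, of t] t by auto
      have "orbit_dist G \<phi> (p t) x0 < D'" using qd DD unfolding quotient_diam_le_def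
        by (meson le_less_trans)
      then obtain \<alpha> where a: "\<alpha> \<in> carrier G" "dist (p t) (\<phi> \<alpha> x0) < D'"
        unfolding orbit_dist_def
        by (subst (asm) cINF_less_iff) (auto intro!: bdd_belowI[of _ 0])
      have "dist x0 (\<phi> \<alpha> x0) < a + D'" using dist_triangle[of x0 "\<phi> \<alpha> x0" "p t"] t a by auto
      moreover have "dist x0 (\<phi> (inv \<alpha> \<otimes> \<gamma>) x0) < b + D'"
        using inv_dist[OF grp iso a(1) g] dist_triangle[of "\<phi> \<alpha> x0" "\<phi> \<gamma> x0" "p t"] d2 a
        by (simp add: dist_commute)
      ultimately show ?thesis using a by blast
    qed
  qed
qed


lemma (in group) prod_eq:
  assumes "a \<in> carrier G" "d \<in> carrier G" "g \<in> carrier G"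
  shows "(a \<otimes> d) \<otimes> (inv d \<otimes> (inv a \<otimes> g)) = g"
proof -
  have c: "x \<otimes> (inv x \<otimes> y) = y" if "x \<in> carrier G" "y \<in> carrier G" for x y
    using that by (simp add: m_assoc[symmetric])
  have "(a \<otimes> d) \<otimes> (inv d \<otimes> (inv a \<otimes> g)) = a \<otimes> (d \<otimes> (inv d \<otimes> (inv a \<otimes> g)))"
    using assms by (simp add: m_assoc)
  also have "\<dots> = g" using assms c by simp
  finally show ?thesis .
qed

lemma count_ineq:
  fixes G (structure) and \<phi> :: "'g \<Rightarrow> 'a::metric_space \<Rightarrow> 'a"
  assumes ls: "length_space TYPE('a)" and grp: "group G" and iso: "isometric_action G \<phi>"
    and pr: "proper_action G \<phi>"
    and qd: "quotient_diam_le G \<phi> D" and DD: "D < D'" and bD: "0 < b + D'" and aD: "0 \<le> a + D'"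
  shows "orbit_count G \<phi> x0 (a+b) * orbit_count G \<phi> x0 e
      \<le> orbit_count G \<phi> x0 (a+D'+e) * orbit_count G \<phi> x0 (b+D'+e)"
proof -
  interpret group G by fact
  define P where "P = (\<lambda>\<gamma> \<alpha>. \<alpha> \<in> carrier G \<and> (\<alpha> = \<one> \<or> dist x0 (\<phi> \<alpha> x0) < a + D') \<and>
           dist x0 (\<phi> (inv \<alpha> \<otimes> \<gamma>) x0) < b + D')"
  define af where "af = (\<lambda>\<gamma>. SOME \<alpha>. P \<gamma> \<alpha>)"
  define A where "A = orbit_set G \<phi> x0 (a+b)"
  define B where "B = orbit_set G \<phi> x0 e"
  define A' where "A' = orbit_set G \<phi> x0 (a+D'+e)"
  define B' where "B' = orbit_set G \<phi> x0 (b+D'+e)"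
  have afP: "P \<gamma> (af \<gamma>)" if "\<gamma> \<in> A" for \<gamma>
  proof -
    have "\<exists>\<alpha>. P \<gamma> \<alpha>" using decomp[OF ls grp iso qd DD bD, of \<gamma> x0 a] that
      unfolding P_def A_def orbit_set_def by auto
    thus ?thesis unfolding af_def by (rule someI_ex)
  qed
  define f where "f = (\<lambda>(\<gamma>,\<delta>). (af \<gamma> \<otimes> \<delta>, inv \<delta> \<otimes> (inv (af \<gamma>) \<otimes> \<gamma>)))"
  have img: "f ` (A \<times> B) \<subseteq> A' \<times> B'"
  proof clarify
    fix u v \<gamma> \<delta> assume uv: "(u, v) = f (\<gamma>, \<delta>)" and g: "\<gamma> \<in> A" and d: "\<delta> \<in> B"
    let ?a = "af \<gamma>"
    have Pa: "P \<gamma> ?a" using afP g .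
    have gc: "\<gamma> \<in> carrier G" using g unfolding A_def orbit_set_def by auto
    have dc: "\<delta> \<in> carrier G" and dd: "dist x0 (\<phi> \<delta> x0) < e" using d unfolding B_def orbit_set_def by auto
    have ac: "?a \<in> carrier G" using Pa P_def by auto
    have "dist x0 (\<phi> (?a \<otimes> \<delta>) x0) < a + D' + e"
    proof (cases "?a = \<one>")
      case True thus ?thesis using dc dd aD by simp
    next
      case False
      hence "dist x0 (\<phi> ?a x0) < a + D'" using Pa P_def by auto
      moreover have "dist x0 (\<phi> (?a \<otimes> \<delta>) x0) \<le> dist x0 (\<phi> ?a x0) + dist (\<phi> ?a x0) (\<phi> ?a (\<phi> \<delta> x0))"
        using act_comp[OF iso ac dc] dist_triangle by metis
      ultimately show ?thesis using act_iso[OF iso ac] dd by simp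
    qed
    hence "u \<in> A'" using uv ac dc unfolding f_def A'_def orbit_set_def by auto
    have bc: "inv ?a \<otimes> \<gamma> \<in> carrier G" using ac gc by simp
    have "dist x0 (\<phi> (inv \<delta> \<otimes> (inv ?a \<otimes> \<gamma>)) x0) = dist (\<phi> \<delta> x0) (\<phi> (inv ?a \<otimes> \<gamma>) x0)"
      using inv_dist[OF grp iso dc bc] .
    also have "\<dots> \<le> dist x0 (\<phi> \<delta> x0) + dist x0 (\<phi> (inv ?a \<otimes> \<gamma>) x0)"
      by (metis dist_commute dist_triangle)
    also have "\<dots> < b + D' + e" using dd Pa P_def by auto
    finally have "v \<in> B'" using uv dc bc unfolding f_def B'_def orbit_set_def by auto
    with \<open>u \<in> A'\<close> show "u \<in> A' \<and> v \<in> B'" by simp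
  qed
  have inj: "inj_on f (A \<times> B)"
  proof (rule inj_onI, clarify)
    fix \<gamma> \<delta> \<gamma>' \<delta>' assume g: "\<gamma> \<in> A" "\<delta> \<in> B" "\<gamma>' \<in> A" "\<delta>' \<in> B" and eq: "f (\<gamma>, \<delta>) = f (\<gamma>', \<delta>')"
    have gc: "\<gamma> \<in> carrier G" "\<gamma>' \<in> carrier G" using g unfolding A_def orbit_set_def by auto
    have dc: "\<delta> \<in> carrier G" "\<delta>' \<in> carrier G" using g unfolding B_def orbit_set_def by auto
    have ac: "af \<gamma> \<in> carrier G" "af \<gamma>' \<in> carrier G" using afP g P_def by auto
    have "\<gamma> = \<gamma>'"
      using eq prod_eq[OF ac(1) dc(1) gc(1)] prod_eq[OF ac(2) dc(2) gc(2)] unfolding f_def by auto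
    moreover have "af \<gamma> \<otimes> \<delta> = af \<gamma>' \<otimes> \<delta>'" using eq unfolding f_def by auto
    ultimately show "\<gamma> = \<gamma>' \<and> \<delta> = \<delta>'" using ac dc by auto
  qed
  have fin: "finite (A' \<times> B')" using os_fin[OF pr] unfolding A'_def B'_def by auto
  have "card (A \<times> B) \<le> card (A' \<times> B')" using card_inj_on_le[OF inj img fin] .
  thus ?thesis unfolding orbit_count_def A_def B_def A'_def B'_def
    by (simp add: card_cartesian_product flip: of_nat_mult)
qed


lemma nat_floor_gt: "(x::real) < 1 + real (nat \<lfloor>x\<rfloor>)"
proof -
  have "real_of_int \<lfloor>x\<rfloor> \<le> real (nat \<lfloor>x\<rfloor>)" by (cases "0 \<le> \<lfloor>x\<rfloor>") auto
  moreover have "x < real_of_int \<lfloor>x\<rfloor> + 1" by (rule real_of_int_floor_add_one_gt)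
  ultimately show ?thesis by linarith
qed
lemma nat_floor_le: "0 \<le> (x::real) \<Longrightarrow> real (nat \<lfloor>x\<rfloor>) \<le> x"
proof -
  assume "0 \<le> x"
  hence "0 \<le> \<lfloor>x\<rfloor>" by simp
  hence "real (nat \<lfloor>x\<rfloor>) = real_of_int \<lfloor>x\<rfloor>" by simp
  thus ?thesis by simp
qed

theorem lemma3p9:
  fixes G :: "('g, 'b) monoid_scheme" and \<phi> :: "'g \<Rightarrow> 'a::metric_space \<Rightarrow> 'a"
    and x0 :: 'a and D C0 R0 :: real
  assumes "length_space TYPE('a)"
    and "group G"
    and "isometric_action G \<phi>"
    and "proper_action G \<phi>"
    and "compact_quotient G \<phi>"
    and "quotient_diam_le G \<phi> D"
    and "C0 > 1" and "R0 > D"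
    and hyp: "\<forall>r \<in> {R0/2..2*R0}. finite (orbit_set G \<phi> x0 r) \<and> 0 < orbit_count G \<phi> x0 r \<and>
               orbit_count G \<phi> x0 (2*r) \<le> C0 * orbit_count G \<phi> x0 r"
  shows "(\<forall>R1 \<ge> R0. \<forall>r \<in> {R1/2..2*R1}.
           orbit_count G \<phi> x0 (2*r) \<le> C0 ^ (3 * (1 + nat \<lfloor>2*R1/R0\<rfloor>)) * orbit_count G \<phi> x0 r)
         \<and> entropy G \<phi> x0 \<le> ereal (3 / R0 * ln C0)"
proof -
  note ls = assms(1) and grp = assms(2) and iso = assms(3) and pr = assms(4) and qd = assms(6)
  let ?c = "orbit_count G \<phi> x0"
  have D0: "0 \<le> D" using D_nonneg[OF grp qd] .
  have R0: "0 < R0" using D0 assms(8) by linarith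
  have C0: "1 < C0" by fact
  have h1: "?c (2*r) \<le> C0 * ?c r" "0 < ?c r" if "R0/2 \<le> r" "r \<le> 2*R0" for r
    using hyp that by auto
  have cpos: "0 < ?c (R0/2)" using h1(2)[of "R0/2"] R0 by simp
  have c4: "?c (4*R0) \<le> C0^3 * ?c (R0/2)"
  proof -
    have "?c (4*R0) \<le> C0 * ?c (2*R0)" using h1(1)[of "2*R0"] R0 by (simp add: mult.assoc)
    also have "\<dots> \<le> C0 * (C0 * ?c R0)" using h1(1)[of R0] R0 C0 by simp
    also have "\<dots> \<le> C0 * (C0 * (C0 * ?c (R0/2)))" using h1(1)[of "R0/2"] R0 C0 by simp
    finally show ?thesis by (simp add: power3_eq_cube mult.assoc)
  qed
  have step: "?c (\<rho> + R0) \<le> C0^3 * ?c \<rho>" if rho: "R0/2 \<le> \<rho>" for \<rho>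
  proof -
    define D' where "D' = (D + R0)/2"
    have DD: "D < D'" using assms(8) unfolding D'_def by simp
    define a where "a = \<rho> - D' - R0/2"
    define b where "b = 4*R0 - D' - R0/2"
    have "?c (a+b) * ?c (R0/2) \<le> ?c (a+D'+R0/2) * ?c (b+D'+R0/2)"
      by (rule count_ineq[OF ls grp iso pr qd DD]) (use R0 rho in \<open>auto simp: a_def b_def\<close>)
    also have "\<dots> = ?c \<rho> * ?c (4*R0)" by (simp add: a_def b_def)
    also have "\<dots> \<le> ?c \<rho> * (C0^3 * ?c (R0/2))"
      using c4 by (intro mult_left_mono) (auto simp: orbit_count_def)
    finally have 1: "?c (a+b) * ?c (R0/2) \<le> (C0^3 * ?c \<rho>) * ?c (R0/2)" by (simp add: mult_ac)
    have "?c (\<rho> + R0) \<le> ?c (a+b)" using DD assms(8)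
      by (intro oc_mono[OF pr]) (simp add: a_def b_def D'_def)
    also have "\<dots> \<le> C0^3 * ?c \<rho>" using 1 cpos by simp
    finally show ?thesis .
  qed
  have iter: "?c (\<rho> + real n * R0) \<le> C0^(3*n) * ?c \<rho>" if rho: "R0/2 \<le> \<rho>" for \<rho> n
  proof (induction n)
    case 0 thus ?case by simp
  next
    case (Suc n)
    have "?c (\<rho> + real (Suc n) * R0) = ?c ((\<rho> + real n * R0) + R0)" by (simp add: algebra_simps)
    also have "\<dots> \<le> C0^3 * ?c (\<rho> + real n * R0)" proof (rule step)
      have "0 \<le> real n * R0" using R0 by simp
      thus "R0/2 \<le> \<rho> + real n * R0" using rho by linarith
    qed
    also have "\<dots> \<le> C0^3 * (C0^(3*n) * ?c \<rho>)" using Suc C0 by (intro mult_left_mono) auto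
    finally show ?case by (simp add: power_add mult.assoc)
  qed
  have part1: "\<forall>R1 \<ge> R0. \<forall>r \<in> {R1/2..2*R1}.
           ?c (2*r) \<le> C0 ^ (3 * (1 + nat \<lfloor>2*R1/R0\<rfloor>)) * ?c r"
  proof (intro allI impI ballI)
    fix R1 r assume R1: "R0 \<le> R1" and r: "r \<in> {R1/2..2*R1}"
    define k where "k = 1 + nat \<lfloor>2*R1/R0\<rfloor>"
    have "2*R1/R0 < real k" unfolding k_def using nat_floor_gt[of "2*R1/R0"] by simp
    hence "2*R1 < real k * R0" using R0 by (simp add: field_simps)
    hence "?c (2*r) \<le> ?c (r + real k * R0)" using r by (intro oc_mono[OF pr]) auto
    also have "\<dots> \<le> C0^(3*k) * ?c r" using r R1 by (intro iter) auto
    finally show "?c (2*r) \<le> C0 ^ (3 * (1 + nat \<lfloor>2*R1/R0\<rfloor>)) * ?c r" unfolding k_def .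
  qed
  define c where "c = ?c R0"
  have cp: "0 < c" unfolding c_def using h1(2)[of R0] R0 by simp
  have bnd: "ln (?c R) / R \<le> 3 / R0 * ln C0 + ln c / R" if R: "R0 \<le> R" for R
  proof -
    define n where "n = nat \<lfloor>R/R0\<rfloor>"
    have n1: "R < R0 + real n * R0"
    proof -
      have "R/R0 < 1 + real n" unfolding n_def by (rule nat_floor_gt)
      thus ?thesis using R0 by (simp add: field_simps)
    qed
    have n2: "real n \<le> R/R0" unfolding n_def using R0 R by (intro nat_floor_le) simp
    have "?c R \<le> ?c (R0 + real n * R0)" using n1 by (intro oc_mono[OF pr]) auto
    also have "\<dots> \<le> C0^(3*n) * c" unfolding c_def using R0 by (intro iter) auto
    finally have cR: "?c R \<le> C0^(3*n) * c" .
    have cRp: "0 < ?c R" using cpos oc_mono[OF pr, of "R0/2" R x0] R R0 by simp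
    have "ln (?c R) \<le> ln (C0^(3*n) * c)" using cR cRp by simp
    also have "\<dots> = real (3*n) * ln C0 + ln c" using C0 cp by (simp add: ln_mult ln_realpow)
    also have "\<dots> \<le> 3 * (R/R0) * ln C0 + ln c" using n2 C0
      by (intro add_right_mono mult_right_mono) auto
    finally have "ln (?c R) \<le> 3 * (R/R0) * ln C0 + ln c" .
    hence "ln (?c R) / R \<le> (3 * (R/R0) * ln C0 + ln c) / R" using R R0
      by (intro divide_right_mono) auto
    also have "\<dots> = 3 / R0 * ln C0 + ln c / R" using R R0 by (simp add: field_simps)
    finally show ?thesis .
  qed
  have "entropy G \<phi> x0 \<le> Liminf at_top (\<lambda>R. ereal (3 / R0 * ln C0 + ln c / R))"
    unfolding entropy_def
    by (intro Liminf_mono eventually_mono[OF eventually_ge_at_top[of R0]]) (use bnd in auto)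
  also have "\<dots> = ereal (3 / R0 * ln C0)"
  proof (rule lim_imp_Liminf)
    show "\<not> trivial_limit (at_top :: real filter)" by simp
    have "((\<lambda>R::real. ln c / R) \<longlongrightarrow> 0) at_top"
      by (rule tendsto_divide_0[OF tendsto_const filterlim_at_top_imp_at_infinity[OF filterlim_ident]])
    hence "((\<lambda>R. 3 / R0 * ln C0 + ln c / R) \<longlongrightarrow> 3 / R0 * ln C0 + 0) at_top"
      by (intro tendsto_add tendsto_const)
    thus "((\<lambda>R. ereal (3 / R0 * ln C0 + ln c / R)) \<longlongrightarrow> ereal (3 / R0 * ln C0)) at_top"
      by (intro tendsto_ereal) simp
  qed
  finally show ?thesis using part1 by blast
qed

end
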